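(* Let $\xi>0$, $v_2<v_1$ with either $v_2<0<v_1$ or $0<v_2<v_1$, and for $\lambda>0$ let $\tilde p(x,t|v_j)$ be the (generalized) density of $\tilde X(t)$, the position of the extended telegraph process driven by GCPs with parameter $\lambda$ with Poissonian resets to the origin at rate $\xi$, conditional on $\tilde X(0)=0$, $V(0)=v_j$. Then for $t>0$, $v_2t<x<v_1t$ and $j=1,2$, $$ \pi(x,t):=\lim_{\lambda\to+\infty}\tilde p(x,t|v_j)=\mathbb 1_{\{v_2t<x<v_1t\}}\frac{e^{-\xi t}}{(v_1-v_2)t}+\boldsymbol I(x,t)\frac{\xi}{v_1-v_2}\Gamma^\xi(x,t), $$ where $\Gamma^\xi(x,t)=\Gamma[0,M_x\xi,t\xi]$ if $v_2<0<v_1$ and $\Gamma^\xi(x,t)=\Gamma[0,\frac{x}{v_1}\xi,m_{x,t}\xi]$ if $0<v_2<v_1$.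
   Context: GCP with intensity $\lambda>0$: a Poisson process whose rate is random, exponentially distributed with mean $\lambda$; increments satisfy $P\{\tilde N_\lambda(t+s)-\tilde N_\lambda(t)=k\}=\frac{1}{1+\lambda s}(\frac{\lambda s}{1+\lambda s})^k$. The process: a particle starts at the origin with velocity $V(0)=v_j$ ($v_1,v_2\neq0$, $v_2<v_1$), moves with velocity alternating between $v_1$ and $v_2$, the periods at velocity $v_1$ and at $v_2$ being governed by two independent GCPs of intensity $\lambda$; additionally it is instantaneously reset to the origin at the epochs of an independent Poisson process of rate $\xi$, restarting afresh with velocity $v_j$. Equivalently, its density is $\tilde p(x,t|v_j)=e^{-\xi t}p(x,t|v_j)+\xi\int_0^te^{-\xi s}p(x,s|v_j)ds$, where $p(x,t|v_j)=\frac{\delta(x-v_jt)}{1+\lambda t}+\mathbb 1_{\{v_2t<x<v_1t\}}\frac{\lambda}{(v_1-v_2)(1+\lambda t)}$ is the (generalized, with Dirac delta $\delta$) density of the process without resets. Notation: $M_x=\max\{x/v_1,x/v_2\}$, $m_{x,t}=\min\{x/v_2,t\}$, $\Gamma(a,z_0,z_1)=\int_{z_0}^{z_1}s^{a-1}e^{-s}ds$, $\boldsymbol I(x,t)=\mathbb 1_{\{\min\{v_2t,0\}<x<v_1t\}}$. *)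

theory Defs
  imports "HOL-Analysis.Analysis"
begin

definition inc_Gamma :: "real \<Rightarrow> real \<Rightarrow> real \<Rightarrow> real" where
  "inc_Gamma a z0 z1 = integral {z0..z1} (\<lambda>s. s powr (a - 1) * exp (- s))"

text \<open>Absolutely continuous part of the density p(x,t|v_j) of the process without resets
  (the uniform part on the open interval (v2 t, v1 t)).\<close>
definition p_ac :: "real \<Rightarrow> real \<Rightarrow> real \<Rightarrow> real \<Rightarrow> real \<Rightarrow> real" where
  "p_ac lam v1 v2 x t =
     (if v2 * t < x \<and> x < v1 * t then lam / ((v1 - v2) * (1 + lam * t)) else 0)"

text \<open>Value of  int_0^t e^(-xi s) delta(x - vj s) / (1 + lam s) ds  (vj nonzero),
  using delta(x - vj s) = delta(s - x/vj) / |vj|.\<close>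
definition delta_int :: "real \<Rightarrow> real \<Rightarrow> real \<Rightarrow> real \<Rightarrow> real \<Rightarrow> real" where
  "delta_int lam xi vj x t =
     (let s0 = x / vj in
      if 0 < s0 \<and> s0 < t then exp (- xi * s0) / ((1 + lam * s0) * \<bar>vj\<bar>) else 0)"

text \<open>The density p~(x,t|vj) = e^(-xi t) p(x,t|vj) + xi int_0^t e^(-xi s) p(x,s|vj) ds,
  evaluated at a point x different from vj*t (where the Dirac term
  delta(x - vj t)/(1 + lam t) of the first summand vanishes).\<close>
definition p_tilde :: "real \<Rightarrow> real \<Rightarrow> real \<Rightarrow> real \<Rightarrow> real \<Rightarrow> real \<Rightarrow> real \<Rightarrow> real" where
  "p_tilde lam xi v1 v2 vj x t =
     exp (- xi * t) * p_ac lam v1 v2 x t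
     + xi * (delta_int lam xi vj x t
             + integral {0..t} (\<lambda>s. exp (- xi * s) * p_ac lam v1 v2 x s))"

definition M_x :: "real \<Rightarrow> real \<Rightarrow> real \<Rightarrow> real" where
  "M_x v1 v2 x = max (x / v1) (x / v2)"

definition m_xt :: "real \<Rightarrow> real \<Rightarrow> real \<Rightarrow> real" where
  "m_xt v2 x t = min (x / v2) t"

definition Ind :: "real \<Rightarrow> real \<Rightarrow> real \<Rightarrow> real \<Rightarrow> real" where
  "Ind v1 v2 x t = (if min (v2 * t) 0 < x \<and> x < v1 * t then 1 else 0)"

definition Gamma_xi :: "real \<Rightarrow> real \<Rightarrow> real \<Rightarrow> real \<Rightarrow> real \<Rightarrow> real" where
  "Gamma_xi xi v1 v2 x t =
     (if v2 < 0 \<and> 0 < v1 then inc_Gamma 0 (M_x v1 v2 x * xi) (t * xi)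
      else inc_Gamma 0 (x / v1 * xi) (m_xt v2 x t * xi))"

end

theory Submission
  imports Defs
begin

lemma lim_int:
  fixes a b K xi :: real
  assumes "0 < a" "a \<le> b" "K > 0" "xi \<ge> 0"
  shows "((\<lambda>lam. integral {a..b} (\<lambda>s. exp (- xi * s) * (lam / (K * (1 + lam * s)))))
          \<longlongrightarrow> integral {a..b} (\<lambda>s. exp (- xi * s) / (K * s))) at_top"
proof -
  define g where "g = (\<lambda>s. exp (- xi * s) / (K * s))"
  define f where "f = (\<lambda>lam s. exp (- xi * s) * (lam / (K * (1 + lam * s))))"
  define D where "D = (\<lambda>lam s. exp (- xi * s) / (K * s * (1 + lam * s)))"
  have ig: "g integrable_on {a..b}" unfolding g_def
    using assms by (intro integrable_continuous_interval continuous_intros) auto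
  have pos: "1 + lam * x > 0" "x > 0" if "lam \<ge> 0" "x \<in> {a..b}" for lam x
    using assms that by (auto intro!: add_pos_nonneg)
  have if_: "f lam integrable_on {a..b}" if "lam \<ge> 0" for lam
  proof -
    have nz: "\<forall>x\<in>{a..b}. K * (1 + lam * x) \<noteq> 0"
    proof
      fix x assume x: "x \<in> {a..b}"
      have "1 + lam * x > 0" "x > 0" using pos[OF that x] by auto
      then show "K * (1 + lam * x) \<noteq> 0" using assms by simp
    qed
    then show ?thesis unfolding f_def
      by (intro integrable_continuous_interval continuous_intros) (use nz in force)+
  qed
  have iD: "D lam integrable_on {a..b}" if "lam \<ge> 0" for lam
  proof -
    have nz: "\<forall>x\<in>{a..b}. K * x * (1 + lam * x) \<noteq> 0"
    proof
      fix x assume x: "x \<in> {a..b}"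
      have "1 + lam * x > 0" "x > 0" using pos[OF that x] by auto
      then show "K * x * (1 + lam * x) \<noteq> 0" using assms by simp
    qed
    then show ?thesis unfolding D_def
      by (intro integrable_continuous_interval continuous_intros) (use nz in force)+
  qed
  have eq: "integral {a..b} g - integral {a..b} (f lam) = integral {a..b} (D lam)" if "lam \<ge> 0" for lam
  proof -
    have "integral {a..b} g - integral {a..b} (f lam) = integral {a..b} (\<lambda>s. g s - f lam s)"
      using integral_diff[OF ig if_[OF that]] by simp
    also have "\<dots> = integral {a..b} (D lam)"
    proof (rule integral_cong)
      fix s assume "s \<in> {a..b}"
      then have s: "s > 0" using assms by auto
      have "1 + lam * s > 0" using s that by (simp add: add_pos_nonneg)
      have k: "K \<noteq> 0" using assms by simp
      have gen: "\<And>u. u \<noteq> 0 \<Longrightarrow> 1 / (K * s) - lam / (K * u) = (u - lam * s) / (K * s * u)"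
        using s k by (simp add: field_simps)
      have "1 / (K * s) - lam / (K * (1 + lam * s)) = 1 / (K * s * (1 + lam * s))"
        using gen[of "1 + lam * s"] \<open>1 + lam * s > 0\<close> by simp
      moreover have "g s - f lam s = exp (- xi * s) * (1 / (K * s) - lam / (K * (1 + lam * s)))"
        unfolding g_def f_def by (simp add: right_diff_distrib)
      ultimately show "g s - f lam s = D lam s" unfolding D_def by simp
    qed
    finally show ?thesis .
  qed
  have bnd: "norm (integral {a..b} (D lam)) \<le> (b - a) / (K * a * (1 + lam * a))" if "lam \<ge> 0" for lam
  proof -
    have pt: "norm (D lam s) \<le> 1 / (K * a * (1 + lam * a))" if s: "s \<in> {a..b}" for s
    proof -
      have s0: "s > 0" "a \<le> s" using s assms by auto
      have p1: "1 + lam * a > 0" using assms \<open>lam \<ge> 0\<close> by (simp add: add_pos_nonneg)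
      have p2: "1 + lam * a \<le> 1 + lam * s" using s0 \<open>lam \<ge> 0\<close> by (simp add: mult_left_mono)
      have p3: "K * a * (1 + lam * a) \<le> K * s * (1 + lam * s)"
        using p1 p2 s0 assms by (intro mult_mono) auto
      have p4: "0 < K * a * (1 + lam * a)" using p1 assms by simp
      have e: "exp (- xi * s) \<le> 1" using s0 assms by simp
      have "norm (D lam s) = exp (- xi * s) / (K * s * (1 + lam * s))"
        unfolding D_def using p4 p3 by simp
      also have "\<dots> \<le> 1 / (K * a * (1 + lam * a))"
        by (rule frac_le) (use e p4 p3 in auto)
      finally show ?thesis .
    qed
    have "norm (integral {a..b} (D lam)) \<le> integral {a..b} (\<lambda>s. 1 / (K * a * (1 + lam * a)))"
      by (rule integral_norm_bound_integral) (use pt iD[OF that] in auto)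
    also have "\<dots> = (b - a) / (K * a * (1 + lam * a))" using assms by simp
    finally show ?thesis .
  qed
  define C where "C = (b - a) / (K * a * a)"
  have lim0: "((\<lambda>lam. C * inverse lam) \<longlongrightarrow> 0) at_top"
    by (rule tendsto_mult_right_zero[OF tendsto_inverse_0_at_top[OF filterlim_ident]])
  have bnd2: "norm (integral {a..b} (D lam)) \<le> C * inverse lam" if "lam \<ge> 1" for lam
  proof -
    have l0: "lam \<ge> 0" using that by simp
    have la: "lam * a > 0" using that assms by simp
    have "(b - a) / (K * a * (1 + lam * a)) \<le> (b - a) / (K * a * (lam * a))"
      by (rule divide_left_mono) (use assms la in \<open>auto intro!: mult_pos_pos\<close>)
    also have "\<dots> = C * inverse lam" unfolding C_def using that assms
      by (simp add: field_simps)
    finally show ?thesis using bnd[OF l0] by linarith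
  qed
  have "((\<lambda>lam. integral {a..b} (D lam)) \<longlongrightarrow> 0) at_top"
    by (rule Lim_null_comparison[OF _ lim0]) (use bnd2 in \<open>auto intro: eventually_at_top_linorderI[of 1]\<close>)
  then have "((\<lambda>lam. integral {a..b} g - integral {a..b} (D lam)) \<longlongrightarrow> integral {a..b} g - 0) at_top"
    by (intro tendsto_intros)
  moreover have "eventually (\<lambda>lam. integral {a..b} g - integral {a..b} (D lam) = integral {a..b} (f lam)) at_top"
    using eq by (auto intro!: eventually_at_top_linorderI[of 0] simp: algebra_simps)
  ultimately have "((\<lambda>lam. integral {a..b} (f lam)) \<longlongrightarrow> integral {a..b} g - 0) at_top"
    by (rule Lim_transform_eventually)
  then have "((\<lambda>lam. integral {a..b} (f lam)) \<longlongrightarrow> integral {a..b} g) at_top"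
    by simp
  then show ?thesis unfolding f_def g_def .
qed

lemma subst_gamma:
  fixes a b K xi :: real
  assumes "0 < a" "a \<le> b" "xi > 0"
  shows "integral {a..b} (\<lambda>s. exp (- xi * s) / s) = inc_Gamma 0 (a * xi) (b * xi)"
proof -
  have img: "(\<lambda>x. x / xi) ` {a * xi..b * xi} = {a..b}"
  proof
    show "(\<lambda>x. x / xi) ` {a * xi..b * xi} \<subseteq> {a..b}" using assms
      by (auto simp: field_simps)
    show "{a..b} \<subseteq> (\<lambda>x. x / xi) ` {a * xi..b * xi}"
    proof
      fix y assume "y \<in> {a..b}"
      then have "y * xi \<in> {a * xi..b * xi}" "y = (y * xi) / xi" using assms by auto
      then show "y \<in> (\<lambda>x. x / xi) ` {a * xi..b * xi}" by blast
    qed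
  qed
  have "integral {a..b} (\<lambda>s. (xi * s) powr (0 - 1) * exp (- (xi * s)))
        = (1 / \<bar>xi\<bar>) *\<^sub>R inc_Gamma 0 (a * xi) (b * xi)"
    unfolding inc_Gamma_def
    using integral_stretch_real[where m=xi and a="a*xi" and b="b*xi" and f="\<lambda>s. s powr (0 - 1) * exp (- s)"] assms img by simp
  moreover have "integral {a..b} (\<lambda>s. (xi * s) powr (0 - 1) * exp (- (xi * s)))
        = integral {a..b} (\<lambda>s. exp (- xi * s) / s) / xi"
  proof -
    have "integral {a..b} (\<lambda>s. (xi * s) powr (0 - 1) * exp (- (xi * s)))
        = integral {a..b} (\<lambda>s. (exp (- xi * s) / s) / xi)"
      by (rule integral_cong) (use assms in \<open>auto simp: powr_minus_divide field_simps\<close>)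
    also have "\<dots> = integral {a..b} (\<lambda>s. exp (- xi * s) / s) / xi"
      by (rule integral_divide)
    finally show ?thesis .
  qed
  ultimately show ?thesis using assms by (simp add: field_simps)
qed


lemma int_reduce:
  fixes a b t x v1 v2 xi lam :: real
  assumes "a \<le> b" "{a<..<b} \<subseteq> {s\<in>{0..t}. v2 * s < x \<and> x < v1 * s}"
    "{s\<in>{0..t}. v2 * s < x \<and> x < v1 * s} \<subseteq> {a..b}"
  shows "integral {0..t} (\<lambda>s. exp (- xi * s) * p_ac lam v1 v2 x s)
       = integral {a..b} (\<lambda>s. exp (- xi * s) * (lam / ((v1 - v2) * (1 + lam * s))))"
proof -
  define S where "S = {s. v2 * s < x \<and> x < v1 * s}"
  define h where "h = (\<lambda>s. exp (- xi * s) * (lam / ((v1 - v2) * (1 + lam * s))))"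
  have "integral {0..t} (\<lambda>s. exp (- xi * s) * p_ac lam v1 v2 x s)
      = integral {0..t} (\<lambda>s. if s \<in> S then h s else 0)"
    by (rule integral_cong) (simp add: p_ac_def S_def h_def)
  also have "\<dots> = integral (S \<inter> {0..t}) h" by (rule integral_restrict_Int)
  also have "\<dots> = integral {a..b} h"
  proof (rule integral_spike_set)
    have "S \<inter> {0..t} \<subseteq> {a..b}" using assms(3) unfolding S_def by auto
    then have "{s \<in> S \<inter> {0..t} - {a..b}. h s \<noteq> 0} = {}" by blast
    then show "negligible {s \<in> S \<inter> {0..t} - {a..b}. h s \<noteq> 0}" by (metis negligible_empty)
    have "{a..b} - S \<inter> {0..t} \<subseteq> {a, b}"
    proof
      fix y assume y: "y \<in> {a..b} - S \<inter> {0..t}"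
      show "y \<in> {a, b}"
      proof (rule ccontr)
        assume "y \<notin> {a, b}"
        then have "y \<in> {a<..<b}" using y by auto
        then have "y \<in> S \<inter> {0..t}" using assms(2) unfolding S_def by auto
        then show False using y by blast
      qed
    qed
    then have "{s \<in> {a..b} - S \<inter> {0..t}. h s \<noteq> 0} \<subseteq> {a, b}" by blast
    then show "negligible {s \<in> {a..b} - S \<inter> {0..t}. h s \<noteq> 0}"
      by (rule negligible_subset[rotated]) simp
  qed
  finally show ?thesis unfolding h_def .
qed

lemma delta_lim:
  assumes "vj \<noteq> 0"
  shows "((\<lambda>lam. delta_int lam xi vj x t) \<longlongrightarrow> 0) at_top"
proof (cases "0 < x / vj \<and> x / vj < t")
  case True
  define s0 where "s0 = x / vj"
  define c where "c = exp (- xi * s0)"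
  define d where "d = \<bar>vj\<bar>"
  have "s0 > 0" "d > 0" using True assms by (auto simp: s0_def d_def)
  have c0: "c > 0" unfolding c_def by simp
  have lim0: "((\<lambda>lam. (c / (s0 * d)) * inverse lam) \<longlongrightarrow> 0) at_top"
    by (rule tendsto_mult_right_zero[OF tendsto_inverse_0_at_top[OF filterlim_ident]])
  have bnd: "norm (c / ((1 + lam * s0) * d)) \<le> (c / (s0 * d)) * inverse lam" if "lam \<ge> 1" for lam
  proof -
    have p: "0 < (1 + lam * s0) * d" using \<open>s0 > 0\<close> \<open>d > 0\<close> that
      by (intro mult_pos_pos add_pos_nonneg) auto
    have "norm (c / ((1 + lam * s0) * d)) = c / ((1 + lam * s0) * d)" using p c0 by simp
    also have "\<dots> \<le> c / ((lam * s0) * d)"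
      by (rule divide_left_mono) (use c0 p \<open>s0 > 0\<close> \<open>d > 0\<close> that in \<open>auto intro!: mult_pos_pos\<close>)
    also have "\<dots> = (c / (s0 * d)) * inverse lam" using that by (simp add: field_simps)
    finally show ?thesis .
  qed
  have "((\<lambda>lam. c / ((1 + lam * s0) * d)) \<longlongrightarrow> 0) at_top"
    by (rule Lim_null_comparison[OF _ lim0]) (use bnd in \<open>auto intro: eventually_at_top_linorderI[of 1]\<close>)
  then show ?thesis using True unfolding delta_int_def Let_def s0_def c_def d_def by simp
next
  case False
  then have "(\<lambda>lam. delta_int lam xi vj x t) = (\<lambda>_. 0)"
    unfolding delta_int_def Let_def by auto
  then show ?thesis by simp
qed

lemma first_lim:
  fixes K t :: real
  assumes "K > 0" "t > 0"
  shows "((\<lambda>lam. lam / (K * (1 + lam * t))) \<longlongrightarrow> 1 / (K * t)) at_top"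
proof -
  have l0: "((\<lambda>lam. 1 / (inverse lam + t)) \<longlongrightarrow> 1 / (0 + t)) at_top"
  proof -
    have i0: "((\<lambda>lam::real. inverse lam) \<longlongrightarrow> 0) at_top"
      by (rule tendsto_inverse_0_at_top[OF filterlim_ident])
    have "((\<lambda>lam. inverse lam + t) \<longlongrightarrow> 0 + t) at_top"
      by (rule tendsto_add[OF i0]) simp
    then show ?thesis by (rule tendsto_divide[OF tendsto_const]) (use assms in simp)
  qed
  have "eventually (\<lambda>lam. 1 / (inverse lam + t) = lam / (1 + lam * t)) at_top"
  proof (rule eventually_at_top_linorderI[of 1])
    fix lam :: real assume "lam \<ge> 1"
    then show "1 / (inverse lam + t) = lam / (1 + lam * t)" using assms
      by (simp add: field_simps)
  qed
  then have "((\<lambda>lam. lam / (1 + lam * t)) \<longlongrightarrow> 1 / t) at_top"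
    using Lim_transform_eventually[OF l0] by simp
  then have "((\<lambda>lam. lam / (1 + lam * t) / K) \<longlongrightarrow> 1 / t / K) at_top"
    by (rule tendsto_divide[OF _ tendsto_const]) (use assms in auto)
  then show ?thesis by (simp add: field_simps)
qed


lemma cases_ab:
  fixes xi v1 v2 x t :: real
  assumes "xi > 0" and "v2 < v1"
    and "(v2 < 0 \<and> 0 < v1) \<or> (0 < v2 \<and> v2 < v1)"
    and "t > 0" and "v2 * t < x" and "x < v1 * t"
    and "x \<noteq> 0"
  obtains a b where "0 < a" "a \<le> b"
    "{a<..<b} \<subseteq> {s\<in>{0..t}. v2 * s < x \<and> x < v1 * s}"
    "{s\<in>{0..t}. v2 * s < x \<and> x < v1 * s} \<subseteq> {a..b}"
    "Gamma_xi xi v1 v2 x t = inc_Gamma 0 (a * xi) (b * xi)"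
proof -
  consider "v2 < 0" "0 < v1" "x > 0" | "v2 < 0" "0 < v1" "x < 0" | "0 < v2" "x > 0"
  proof -
    have h: "0 < v2 \<Longrightarrow> 0 < x" using assms(4,5) mult_pos_pos[of v2 t] by linarith
    assume r1: "v2 < 0 \<Longrightarrow> 0 < v1 \<Longrightarrow> x > 0 \<Longrightarrow> thesis"
      and r2: "v2 < 0 \<Longrightarrow> 0 < v1 \<Longrightarrow> x < 0 \<Longrightarrow> thesis"
      and r3: "0 < v2 \<Longrightarrow> x > 0 \<Longrightarrow> thesis"
    show thesis
    proof (cases "v2 < 0")
      case True
      then have "0 < v1" using assms(3) by auto
      then show ?thesis using True r1 r2 assms(7) by (meson linorder_neqE_linordered_idom)
    next
      case False
      then have "0 < v2" using assms(3) by auto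
      then show ?thesis using r3 h by blast
    qed
  qed
  then show ?thesis
  proof cases
    case 1
    have "x / v2 < 0" "0 < x / v1" using 1 by (simp_all add: divide_pos_neg)
    then have M: "M_x v1 v2 x = x / v1" unfolding M_x_def by (simp add: max_def)
    show ?thesis
    proof (rule that[of "x / v1" t])
      show "0 < x / v1" using 1 by simp
      show "x / v1 \<le> t" using 1 assms by (simp add: pos_divide_le_eq mult.commute)
      show "{x / v1<..<t} \<subseteq> {s\<in>{0..t}. v2 * s < x \<and> x < v1 * s}"
      proof
        fix s assume s: "s \<in> {x / v1<..<t}"
        then have "x < v1 * s" using 1 by (simp add: pos_divide_less_eq mult.commute)
        moreover have "s > 0" using s 1 by (meson divide_pos_pos greaterThanLessThan_iff order.strict_trans)
        moreover have "v2 * s < x" using 1 \<open>s > 0\<close> using mult_neg_pos[of v2 s] by linarith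
        ultimately show "s \<in> {s\<in>{0..t}. v2 * s < x \<and> x < v1 * s}" using s by auto
      qed
      show "{s\<in>{0..t}. v2 * s < x \<and> x < v1 * s} \<subseteq> {x / v1..t}"
        using 1 by (auto simp: pos_divide_le_eq mult.commute)
      show "Gamma_xi xi v1 v2 x t = inc_Gamma 0 (x / v1 * xi) (t * xi)"
        unfolding Gamma_xi_def using 1 M by simp
    qed
  next
    case 2
    have "x / v1 < 0" "0 < x / v2" using 2 by (simp_all add: divide_neg_pos divide_neg_neg)
    then have M: "M_x v1 v2 x = x / v2" unfolding M_x_def by (simp add: max_def)
    show ?thesis
    proof (rule that[of "x / v2" t])
      show "0 < x / v2" using 2 by (simp add: divide_neg_neg)
      show "x / v2 \<le> t" using 2 assms by (simp add: neg_divide_le_eq mult.commute)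
      show "{x / v2<..<t} \<subseteq> {s\<in>{0..t}. v2 * s < x \<and> x < v1 * s}"
      proof
        fix s assume s: "s \<in> {x / v2<..<t}"
        then have "v2 * s < x" using 2 by (simp add: neg_divide_less_eq mult.commute)
        moreover have "s > 0" using s 2 by (meson divide_neg_neg greaterThanLessThan_iff order.strict_trans)
        moreover have "x < v1 * s" using 2 \<open>s > 0\<close> using mult_pos_pos[of v1 s] by linarith
        ultimately show "s \<in> {s\<in>{0..t}. v2 * s < x \<and> x < v1 * s}" using s by auto
      qed
      show "{s\<in>{0..t}. v2 * s < x \<and> x < v1 * s} \<subseteq> {x / v2..t}"
        using 2 by (auto simp: neg_divide_le_eq mult.commute)
      show "Gamma_xi xi v1 v2 x t = inc_Gamma 0 (x / v2 * xi) (t * xi)"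
        unfolding Gamma_xi_def using 2 M by simp
    qed
  next
    case 3
    have v1: "v1 > 0" using 3 assms by simp
    show ?thesis
    proof (rule that[of "x / v1" "min (x / v2) t"])
      show "0 < x / v1" using 3 v1 by simp
      have "x / v1 \<le> t" using v1 assms by (simp add: pos_divide_le_eq mult.commute)
      moreover have "x / v1 \<le> x / v2" using 3 v1 assms
        by (simp add: frac_le less_imp_le)
      ultimately show "x / v1 \<le> min (x / v2) t" by simp
      show "{x / v1<..<min (x / v2) t} \<subseteq> {s\<in>{0..t}. v2 * s < x \<and> x < v1 * s}"
      proof
        fix s assume s: "s \<in> {x / v1<..<min (x / v2) t}"
        then have "x < v1 * s" using v1 by (simp add: pos_divide_less_eq mult.commute)
        moreover have "v2 * s < x" using s 3 by (simp add: less_divide_eq mult.commute)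
        moreover have "s > 0" using s 3 v1 by (meson divide_pos_pos greaterThanLessThan_iff order.strict_trans)
        ultimately show "s \<in> {s\<in>{0..t}. v2 * s < x \<and> x < v1 * s}" using s by auto
      qed
      show "{s\<in>{0..t}. v2 * s < x \<and> x < v1 * s} \<subseteq> {x / v1..min (x / v2) t}"
        using 3 v1 by (auto simp: pos_divide_le_eq le_divide_eq mult.commute)
      show "Gamma_xi xi v1 v2 x t = inc_Gamma 0 (x / v1 * xi) (min (x / v2) t * xi)"
        unfolding Gamma_xi_def m_xt_def using 3 by simp
    qed
  qed
qed

theorem corollary2:
  fixes xi v1 v2 vj x t :: real
  assumes "xi > 0" and "v2 < v1"
    and "(v2 < 0 \<and> 0 < v1) \<or> (0 < v2 \<and> v2 < v1)"
    and "vj = v1 \<or> vj = v2"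
    and "t > 0" and "v2 * t < x" and "x < v1 * t"
    and "x \<noteq> 0"
  shows "((\<lambda>lam. p_tilde lam xi v1 v2 vj x t) \<longlongrightarrow>
            (if v2 * t < x \<and> x < v1 * t then exp (- xi * t) / ((v1 - v2) * t) else 0)
            + Ind v1 v2 x t * xi / (v1 - v2) * Gamma_xi xi v1 v2 x t) at_top"
proof -
  obtain a b where ab: "0 < a" "a \<le> b"
    "{a<..<b} \<subseteq> {s\<in>{0..t}. v2 * s < x \<and> x < v1 * s}"
    "{s\<in>{0..t}. v2 * s < x \<and> x < v1 * s} \<subseteq> {a..b}"
    "Gamma_xi xi v1 v2 x t = inc_Gamma 0 (a * xi) (b * xi)"
    using cases_ab[OF assms(1,2,3,5,6,7,8)] by blast
  define K where "K = v1 - v2"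
  have K: "K > 0" using assms(2) unfolding K_def by simp
  have vj0: "vj \<noteq> 0" using assms(3,4) by auto
  have Ind1: "Ind v1 v2 x t = 1"
  proof -
    have "min (v2 * t) 0 < x"
      using assms(3,5,6) mult_pos_pos[of v2 t] by (auto simp: min_def)
    then show ?thesis unfolding Ind_def using assms(7) by simp
  qed
  have pt: "p_tilde lam xi v1 v2 vj x t =
      exp (- xi * t) * (lam / (K * (1 + lam * t)))
      + xi * (delta_int lam xi vj x t
        + integral {a..b} (\<lambda>s. exp (- xi * s) * (lam / (K * (1 + lam * s)))))" for lam
    unfolding p_tilde_def int_reduce[OF ab(2,3,4)] K_def
    using assms(6,7) by (simp add: p_ac_def)
  have gint: "integral {a..b} (\<lambda>s. exp (- xi * s) / (K * s)) = inc_Gamma 0 (a * xi) (b * xi) / K"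
  proof -
    have "integral {a..b} (\<lambda>s. exp (- xi * s) / (K * s))
        = integral {a..b} (\<lambda>s. exp (- xi * s) / s / K)"
      by (rule integral_cong) (simp add: field_simps)
    also have "\<dots> = integral {a..b} (\<lambda>s. exp (- xi * s) / s) / K"
      by (rule integral_divide)
    also have "\<dots> = inc_Gamma 0 (a * xi) (b * xi) / K"
      using subst_gamma[OF ab(1,2) assms(1)] by simp
    finally show ?thesis .
  qed
  have L: "((\<lambda>lam. exp (- xi * t) * (lam / (K * (1 + lam * t)))
      + xi * (delta_int lam xi vj x t
        + integral {a..b} (\<lambda>s. exp (- xi * s) * (lam / (K * (1 + lam * s))))))
      \<longlongrightarrow> exp (- xi * t) * (1 / (K * t)) + xi * (0 + integral {a..b} (\<lambda>s. exp (- xi * s) / (K * s)))) at_top"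
    by (intro tendsto_intros first_lim[OF K assms(5)] delta_lim[OF vj0]
        lim_int[OF ab(1,2) K]) (use assms(1) in simp)
  have eqt: "exp (- xi * t) * (1 / (K * t)) + xi * (0 + integral {a..b} (\<lambda>s. exp (- xi * s) / (K * s)))
    = (if v2 * t < x \<and> x < v1 * t then exp (- xi * t) / ((v1 - v2) * t) else 0)
            + Ind v1 v2 x t * xi / (v1 - v2) * Gamma_xi xi v1 v2 x t"
    unfolding gint unfolding Ind1 ab(5) K_def using assms(6,7) by simp
  show ?thesis using L unfolding pt[symmetric] eqt .
qed

end
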